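(* For all integers $L,M,N\ge 0$, $$\sum_{i,j,k\in\mathbb Z}(-1)^{i+j+k}q^{\binom{i+j+k}{2}+i^2}\begin{bmatrix}2L\\ L-i\end{bmatrix}_{q}\begin{bmatrix}2M\\ M-j\end{bmatrix}_{q}\begin{bmatrix}2N\\ N-k\end{bmatrix}_{q}=q^{(N-M)^2}(q)_{L+M+N}\begin{bmatrix}2L\\ L+N-M\end{bmatrix}_{q}.$$
   Context: $q$ is complex with $|q|<1$. $(q)_n=\prod_{j=1}^n(1-q^j)$. The Gaussian binomial is $\begin{bmatrix}n+m\\ n\end{bmatrix}_q=\frac{(q)_{n+m}}{(q)_n(q)_m}$ if $n,m$ are nonnegative integers and $0$ otherwise. $\binom{x}{2}=x(x-1)/2$. *)

theory Defs
  imports "HOL-Analysis.Analysis"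
begin

definition qpoch :: "complex \<Rightarrow> nat \<Rightarrow> complex" where
  "qpoch q n = (\<Prod>j=1..n. 1 - q ^ j)"

text \<open>Gaussian binomial [n+m choose n]_q for integers: (q)_{n+m}/((q)_n (q)_m) if n, m \<ge> 0, else 0.
  Written as qbinom q a b = [a choose b]_q, i.e. n = b, m = a - b.\<close>
definition qbinom :: "complex \<Rightarrow> int \<Rightarrow> int \<Rightarrow> complex" where
  "qbinom q a b = (if 0 \<le> b \<and> 0 \<le> a - b
     then qpoch q (nat a) / (qpoch q (nat b) * qpoch q (nat (a - b))) else 0)"

definition choose2 :: "int \<Rightarrow> int" where
  "choose2 x = x * (x - 1) div 2"

end

theory Submission
  imports Defs
begin


lemma qpoch_0[simp]: "qpoch q 0 = 1" by (simp add: qpoch_def)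
lemma qpoch_Suc: "qpoch q (Suc n) = qpoch q n * (1 - q ^ Suc n)"
  by (simp add: qpoch_def prod.nat_ivl_Suc' mult.commute)

definition rq :: "complex \<Rightarrow> int \<Rightarrow> complex" where
  "rq q n = (if n < 0 then 0 else inverse (qpoch q (nat n)))"
definition Pq :: "complex \<Rightarrow> int \<Rightarrow> complex" where
  "Pq q n = qpoch q (nat n)"

lemma rq_neg[simp]: "n < 0 \<Longrightarrow> rq q n = 0" by (simp add: rq_def)

lemma qbinom_neg_top: "a < 0 \<Longrightarrow> qbinom q a b = 0" by (simp add: qbinom_def)

locale qc = fixes q :: complex assumes qn: "norm q < 1" and qnz: "q \<noteq> 0"
begin

lemma qpow_ne1: "n > 0 \<Longrightarrow> 1 - q ^ n \<noteq> 0"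
proof
  assume "n > 0" "1 - q ^ n = 0"
  hence "norm (q ^ n) = 1" by simp
  moreover have "norm (q ^ n) < 1" using \<open>n>0\<close> qn by (simp add: norm_power power_less_one_iff)
  ultimately show False by simp
qed

lemma qpoch_nz[simp]: "qpoch q n \<noteq> 0"
proof (induction n)
  case (Suc n)
  show ?case unfolding qpoch_Suc by (rule no_zero_divisors[OF Suc.IH qpow_ne1]) simp
qed simp

lemma Pq_nz[simp]: "Pq q n \<noteq> 0" by (simp add: Pq_def)

lemma Pq_rq: "0 \<le> n \<Longrightarrow> Pq q n * rq q n = 1" by (simp add: Pq_def rq_def)

lemma rq_nz: "0 \<le> n \<Longrightarrow> rq q n \<noteq> 0" by (simp add: rq_def)

lemma rq_step: "rq q n = (1 - q powi (n+1)) * rq q (n+1)"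
proof -
  consider "n < -1" | "n = -1" | "0 \<le> n" by linarith
  then show ?thesis
  proof cases
    case 3
    then obtain m where m: "n = int m" using nonneg_int_cases by blast
    have "nat (int m + 1) = Suc m" by simp
    then show ?thesis using m qpoch_nz[of "Suc m"] qpoch_nz[of m]
      by (simp add: rq_def qpoch_Suc power_int_def field_simps)
  qed auto
qed

lemma Pq_step: "0 \<le> n \<Longrightarrow> Pq q (n+1) = Pq q n * (1 - q powi (n+1))"
proof -
  assume "0 \<le> n"
  then obtain m where m: "n = int m" using nonneg_int_cases by blast
  have "nat (int m + 1) = Suc m" by simp
  then show ?thesis using m by (simp add: Pq_def qpoch_Suc power_int_def)
qed

lemma qbinom_rq: "0 \<le> a \<Longrightarrow> qbinom q a b = Pq q a * rq q b * rq q (a-b)"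
  by (auto simp: qbinom_def Pq_def rq_def field_simps)

lemma powi_add: "q powi (m + n) = q powi m * q powi n"
  using power_int_add[of q m n] qnz by simp

lemma qbinom_pascal2:
  assumes "0 \<le> n"
  shows "qbinom q (n+1) t = qbinom q n t + q powi (n+1-t) * qbinom q n (t-1)"
proof -
  have e1: "rq q (n-t) = (1 - q powi (n+1-t)) * rq q (n+1-t)" using rq_step[of "n-t"] by (simp add: algebra_simps)
  have e2: "rq q (t-1) = (1 - q powi t) * rq q t" using rq_step[of "t-1"] by simp
  have e3: "q powi (n+1) = q powi (n+1-t) * q powi t" using powi_add[of "n+1-t" t] by simp
  have e4: "n + 1 - (t - 1) = n + 1 - t + 1" by simp
  show ?thesis using assms
    apply (simp add: qbinom_rq Pq_step e1 e2 e3)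
    apply (simp add: algebra_simps)
    done
qed

lemma qbinom_rec:
  assumes a: "0 \<le> a"
  shows "qbinom q (a+1) j = qbinom q a j + qbinom q a (j-1) - (1 - q powi a) * qbinom q (a-1) (j-1)"
proof (cases "a = 0")
  case True
  have "qbinom q 1 j = qbinom q 0 j + qbinom q 0 (j-1)"
    by (cases "j=0"; cases "j=1") (auto simp: qbinom_def)
  thus ?thesis using True by simp
next
  case False
  hence a1: "1 \<le> a" using a by simp
  have e1: "rq q (a-j) = (1 - q powi (a+1-j)) * rq q (a+1-j)" using rq_step[of "a-j"] by (simp add: algebra_simps)
  have e2: "rq q (j-1) = (1 - q powi j) * rq q j" using rq_step[of "j-1"] by simp
  have e3: "q powi (a+1) = q powi (a+1-j) * q powi j" using powi_add[of "a+1-j" j] by simp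
  have e5: "Pq q a = Pq q (a-1) * (1 - q powi a)" using Pq_step[of "a-1"] a1 by simp
  have e6: "Pq q (a+1) = Pq q (a-1) * (1 - q powi a) * (1 - q powi (a+1))" using Pq_step[of a] a e5 by simp
  have e7: "a - 1 - (j - 1) = a - j" "a - (j - 1) = a + 1 - j" by simp_all
  show ?thesis using a a1
    apply (simp add: qbinom_rq e7)
    apply (simp add: e1 e2 e6 e5 e3)
    apply (simp add: algebra_simps)
    done
qed

end



definition zsum :: "(int \<Rightarrow> complex) \<Rightarrow> complex" where "zsum f = sum f {x. f x \<noteq> 0}"
definition fs :: "(int \<Rightarrow> complex) \<Rightarrow> bool" where "fs f \<longleftrightarrow> finite {x. f x \<noteq> 0}"

lemma zsum_eq: "finite S \<Longrightarrow> (\<And>x. x \<notin> S \<Longrightarrow> f x = 0) \<Longrightarrow> zsum f = sum f S"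
  unfolding zsum_def by (rule sum.mono_neutral_left) auto

lemma zsum_ivl: "(\<And>x. f x \<noteq> 0 \<Longrightarrow> lo \<le> x \<and> x \<le> hi) \<Longrightarrow> zsum f = sum f {lo..hi}"
  by (rule zsum_eq) auto

lemma fs_ivl: "(\<And>x. f x \<noteq> 0 \<Longrightarrow> lo \<le> x \<and> x \<le> hi) \<Longrightarrow> fs f"
  unfolding fs_def by (rule finite_subset[of _ "{lo..hi}"]) auto

lemma fs_mult1: "fs f \<Longrightarrow> fs (\<lambda>x. f x * g x)"
  unfolding fs_def by (rule finite_subset) auto
lemma fs_mult2: "fs f \<Longrightarrow> fs (\<lambda>x. g x * f x)"
  unfolding fs_def by (rule finite_subset) auto

lemma zsum_single: "(\<And>x. x \<noteq> a \<Longrightarrow> f x = 0) \<Longrightarrow> zsum f = f a"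
  using zsum_eq[of "{a}" f] by auto

lemma zsum_zero: "(\<And>x. f x = 0) \<Longrightarrow> zsum f = 0"
  by (simp add: zsum_def)

lemma zsum_cong: "(\<And>x. f x = g x) \<Longrightarrow> zsum f = zsum g"
  by (metis ext)

lemma zsum_cmult: "zsum (\<lambda>x. c * f x) = c * zsum f"
  by (cases "c = 0") (simp_all add: zsum_def sum_distrib_left)

lemma zsum_multc: "zsum (\<lambda>x. f x * c) = zsum f * c"
  using zsum_cmult[of c f] by (simp add: mult.commute)

lemma zsum_add: "fs f \<Longrightarrow> fs g \<Longrightarrow> zsum (\<lambda>x. f x + g x) = zsum f + zsum g"
proof -
  assume "fs f" "fs g"
  let ?S = "{x. f x \<noteq> 0} \<union> {x. g x \<noteq> 0}"
  have fin: "finite ?S" using \<open>fs f\<close> \<open>fs g\<close> by (simp add: fs_def)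
  have "zsum (\<lambda>x. f x + g x) = sum (\<lambda>x. f x + g x) ?S" by (rule zsum_eq[OF fin]) auto
  also have "\<dots> = sum f ?S + sum g ?S" by (simp add: sum.distrib)
  also have "sum f ?S = zsum f" by (rule zsum_eq[OF fin, symmetric]) auto
  also have "sum g ?S = zsum g" by (rule zsum_eq[OF fin, symmetric]) auto
  finally show ?thesis .
qed

lemma zsum_diff: "fs f \<Longrightarrow> fs g \<Longrightarrow> zsum (\<lambda>x. f x - g x) = zsum f - zsum g"
proof -
  assume "fs f" "fs g"
  have "fs (\<lambda>x. (-1) * g x)" using \<open>fs g\<close> by (rule fs_mult2)
  hence "zsum (\<lambda>x. f x + (-1) * g x) = zsum f + zsum (\<lambda>x. (-1) * g x)"
    using zsum_add[OF \<open>fs f\<close>] by blast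
  thus ?thesis using zsum_cmult[of "-1" g] by simp
qed

lemma fs_add: "fs f \<Longrightarrow> fs g \<Longrightarrow> fs (\<lambda>x. f x + g x)"
  unfolding fs_def by (rule finite_subset[of _ "{x. f x \<noteq> 0} \<union> {x. g x \<noteq> 0}"]) auto

lemma zsum_shift: "zsum (\<lambda>x. f (x + c)) = zsum f"
proof -
  have e: "{x. f x \<noteq> 0} = (\<lambda>y. y + c) ` {x. f (x + c) \<noteq> 0}"
    by (auto simp: image_iff intro!: exI[of _ "_ - c"])
  have "zsum f = sum f ((\<lambda>y. y + c) ` {x. f (x + c) \<noteq> 0})" unfolding zsum_def e ..
  also have "\<dots> = sum (\<lambda>x. f (x + c)) {x. f (x + c) \<noteq> 0}"
    by (subst sum.reindex) (auto simp: inj_on_def)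
  finally show ?thesis by (simp add: zsum_def)
qed

lemma zsum_reflect: "zsum (\<lambda>x. f (c - x)) = zsum f"
proof -
  have e: "{x. f x \<noteq> 0} = (\<lambda>y. c - y) ` {x. f (c - x) \<noteq> 0}"
    by (auto simp: image_iff intro!: exI[of _ "c - _"])
  have "zsum f = sum f ((\<lambda>y. c - y) ` {x. f (c - x) \<noteq> 0})" unfolding zsum_def e ..
  also have "\<dots> = sum (\<lambda>x. f (c - x)) {x. f (c - x) \<noteq> 0}"
    by (subst sum.reindex) (auto simp: inj_on_def)
  finally show ?thesis by (simp add: zsum_def)
qed

lemma zsum_swap:
  assumes "finite S" "finite T" "\<And>x y. F x y \<noteq> 0 \<Longrightarrow> x \<in> S \<and> y \<in> T"
  shows "zsum (\<lambda>x. zsum (\<lambda>y. F x y)) = zsum (\<lambda>y. zsum (\<lambda>x. F x y))"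
proof -
  have i1: "\<And>x. zsum (\<lambda>y. F x y) = sum (F x) T" by (rule zsum_eq[OF assms(2)]) (use assms(3) in blast)
  have i2: "\<And>y. zsum (\<lambda>x. F x y) = sum (\<lambda>x. F x y) S" by (rule zsum_eq[OF assms(1)]) (use assms(3) in blast)
  have "zsum (\<lambda>x. zsum (\<lambda>y. F x y)) = sum (\<lambda>x. sum (F x) T) S"
    unfolding i1 by (rule zsum_eq[OF assms(1)]) (use assms(3) in \<open>auto intro!: sum.neutral\<close>)
  also have "\<dots> = sum (\<lambda>y. sum (\<lambda>x. F x y) S) T" by (rule sum.swap)
  also have "\<dots> = zsum (\<lambda>y. zsum (\<lambda>x. F x y))"
    unfolding i2 by (rule zsum_eq[OF assms(2), symmetric]) (use assms(3) in \<open>auto intro!: sum.neutral\<close>)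
  finally show ?thesis .
qed

lemma zsum_sum: "finite P \<Longrightarrow> (\<And>p. p \<in> P \<Longrightarrow> fs (f p)) \<Longrightarrow> zsum (\<lambda>x. \<Sum>p\<in>P. f p x) = (\<Sum>p\<in>P. zsum (f p))"
proof (induction P rule: finite_induct)
  case (insert a P)
  have "fs (\<lambda>x. \<Sum>p\<in>P. f p x)"
  proof -
    have "{x. (\<Sum>p\<in>P. f p x) \<noteq> 0} \<subseteq> (\<Union>p\<in>P. {x. f p x \<noteq> 0})" by (auto elim: sum.not_neutral_contains_not_neutral)
    thus ?thesis using insert by (auto simp: fs_def intro: finite_subset)
  qed
  thus ?case using insert by (simp add: zsum_add)
qed (simp add: zsum_def)

lemma c2_2: "2 * choose2 x = x * (x - 1)"
proof -
  have "even (x * (x - 1))" by simp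
  thus ?thesis by (simp add: choose2_def)
qed

lemma c2_add: "choose2 (a+b) = choose2 a + choose2 b + a* b"
proof -
  have "2 * choose2 (a+b) = 2 * (choose2 a + choose2 b + a* b)"
    unfolding distrib_left c2_2 by (simp add: algebra_simps)
  thus ?thesis by simp
qed

lemma c2_nonneg: "0 \<le> choose2 x"
proof -
  have "0 \<le> x * (x - 1)" by (cases "x \<ge> 1") (auto intro: mult_nonneg_nonneg mult_nonpos_nonpos)
  thus ?thesis using c2_2[of x] by simp
qed

lemma c2_uminus: "choose2 (-x) = choose2 x + x"
proof -
  have "2 * choose2 (-x) = 2 * (choose2 x + x)"
    unfolding distrib_left c2_2 by (simp add: algebra_simps)
  thus ?thesis by simp
qed

lemma sgn_nat_abs: "(-1::complex) ^ nat \<bar>x\<bar> = (if even x then 1 else -1)"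
proof -
  have "even (nat \<bar>x\<bar>) \<longleftrightarrow> even x" by (simp add: even_nat_iff)
  thus ?thesis by (simp add: minus_one_power_iff)
qed

definition wt :: "complex \<Rightarrow> int \<Rightarrow> complex" where
  "wt q n = (-1) ^ nat \<bar>n\<bar> * q powi choose2 n"

context qc begin

lemma wt_add: "wt q (a+b) = wt q a * wt q b * q powi (a* b)"
  unfolding wt_def sgn_nat_abs c2_add powi_add by auto

lemma wt_uminus: "wt q (-x) = wt q x * q powi x"
  unfolding wt_def sgn_nat_abs c2_uminus powi_add by auto

lemma wt_0[simp]: "wt q 0 = 1" by (simp add: wt_def choose2_def)
lemma wt_1[simp]: "wt q 1 = -1" by (simp add: wt_def choose2_def)

end



lemma qbinom_nz: "qbinom q a b \<noteq> 0 \<Longrightarrow> 0 \<le> b \<and> b \<le> a"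
  by (auto simp: qbinom_def split: if_splits)

definition Aq :: "complex \<Rightarrow> int \<Rightarrow> int \<Rightarrow> complex" where
  "Aq q n r = qbinom q (2* n) (n - r)"

lemma Aq_nz: "Aq q n r \<noteq> 0 \<Longrightarrow> -n \<le> r \<and> r \<le> n"
  unfolding Aq_def by (drule qbinom_nz) simp

lemma qpoch_prod: "qpoch q m = (\<Prod>s<m. 1 - q ^ Suc s)"
  by (induction m) (simp_all add: qpoch_Suc)

context qc begin

lemma qbt:
  assumes y: "y \<noteq> 0"
  shows "zsum (\<lambda>t. wt q t * qbinom q (int n) t * y powi t) = (\<Prod>s<n. 1 - y * q^s)"
proof (induction n)
  case 0
  have "zsum (\<lambda>t. wt q t * qbinom q (int 0) t * y powi t) = wt q 0 * qbinom q (int 0) 0 * y powi 0"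
    by (rule zsum_single) (auto simp: qbinom_def)
  thus ?case by (simp add: qbinom_def)
next
  case (Suc n)
  have S: "\<And>t. wt q t * qbinom q (int (Suc n)) t * y powi t = wt q t * qbinom q (int n) t * y powi t
      + wt q t * q powi (int n + 1 - t) * qbinom q (int n) (t - 1) * y powi t"
    using qbinom_pascal2[of "int n"] by (simp add: algebra_simps)
  have f1: "fs (\<lambda>t. wt q t * qbinom q (int n) t * y powi t)"
    by (rule fs_ivl[of _ 0 "int n"]) (auto dest: qbinom_nz)
  have f2: "fs (\<lambda>t. wt q t * q powi (int n + 1 - t) * qbinom q (int n) (t - 1) * y powi t)"
    by (rule fs_ivl[of _ 1 "int n + 1"]) (auto dest: qbinom_nz)
  have sh: "zsum (\<lambda>t. wt q t * q powi (int n + 1 - t) * qbinom q (int n) (t - 1) * y powi t)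
      = zsum (\<lambda>s. wt q (s+1) * q powi (int n + 1 - (s+1)) * qbinom q (int n) (s + 1 - 1) * y powi (s+1))"
    by (rule zsum_shift[symmetric])
  have e: "\<And>s. wt q (s+1) * q powi (int n + 1 - (s+1)) * qbinom q (int n) (s + 1 - 1) * y powi (s+1)
      = (- y * q ^ n) * (wt q s * qbinom q (int n) s * y powi s)"
  proof -
    fix s
    have "q powi s * q powi (int n - s) = q ^ n" using powi_add[of s "int n - s"] by simp
    moreover have "y powi (s+1) = y powi s * y" using power_int_add_1[of y s] y by simp
    ultimately show "wt q (s+1) * q powi (int n + 1 - (s+1)) * qbinom q (int n) (s + 1 - 1) * y powi (s+1)
      = (- y * q ^ n) * (wt q s * qbinom q (int n) s * y powi s)"
      by (simp add: wt_add algebra_simps)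
  qed
  have "zsum (\<lambda>t. wt q t * qbinom q (int (Suc n)) t * y powi t)
     = zsum (\<lambda>t. wt q t * qbinom q (int n) t * y powi t) + zsum (\<lambda>t. wt q t * q powi (int n + 1 - t) * qbinom q (int n) (t - 1) * y powi t)"
    unfolding S by (rule zsum_add[OF f1 f2])
  also have "\<dots> = (1 - y * q^n) * zsum (\<lambda>t. wt q t * qbinom q (int n) t * y powi t)"
    unfolding sh e zsum_cmult by (simp add: algebra_simps)
  finally show ?case using Suc.IH by (simp add: mult.commute)
qed

lemma Pn_formula:
  assumes n: "0 \<le> n"
  shows "zsum (\<lambda>r. wt q r * Aq q n r * q powi (r* k)) = wt q n * q powi (n* k) * (\<Prod>s<nat(2* n). 1 - q powi (1-n-k) * q^s)"
proof -
  let ?y = "q powi (1-n-k)"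
  have y: "?y \<noteq> 0" using qnz by simp
  have "zsum (\<lambda>r. wt q r * Aq q n r * q powi (r* k)) = zsum (\<lambda>t. wt q (n - t) * Aq q n (n - t) * q powi ((n - t)* k))"
    by (rule zsum_reflect[symmetric])
  also have "\<dots> = zsum (\<lambda>t. (wt q n * q powi (n* k)) * (wt q t * qbinom q (int (nat (2* n))) t * ?y powi t))"
  proof (rule zsum_cong)
    fix t
    have e1: "wt q (n - t) = wt q n * wt q t * q powi t * q powi (n * (-t))"
      using wt_add[of n "-t"] wt_uminus[of t] by simp
    have e2: "q powi t * q powi (n * (-t)) * q powi ((n-t)* k) = q powi (n* k) * ?y powi t"
    proof -
      have "q powi t * q powi (n * (-t)) * q powi ((n-t)* k) = q powi (t + n*(-t) + (n-t)* k)"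
        by (simp only: powi_add[symmetric])
      also have "t + n*(-t) + (n-t)* k = n* k + (1-n-k)* t" by (simp add: algebra_simps)
      also have "q powi (n* k + (1-n-k)* t) = q powi (n* k) * ?y powi t"
        by (simp add: powi_add power_int_mult)
      finally show ?thesis .
    qed
    have e3: "int (nat (2* n)) = 2* n" using n by simp
    show "wt q (n - t) * Aq q n (n - t) * q powi ((n - t)* k) = (wt q n * q powi (n* k)) * (wt q t * qbinom q (int (nat (2* n))) t * ?y powi t)"
      unfolding e1 e3 Aq_def using e2 by (simp add: algebra_simps)
  qed
  also have "\<dots> = wt q n * q powi (n* k) * (\<Prod>s<nat(2* n). 1 - ?y * q^s)"
    unfolding zsum_cmult qbt[OF y] ..
  finally show ?thesis .
qed

lemma Pn_zero:
  assumes n: "0 \<le> n" and k: "1 - n \<le> k" "k \<le> n"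
  shows "zsum (\<lambda>r. wt q r * Aq q n r * q powi (r* k)) = 0"
proof -
  let ?s = "nat (n + k - 1)"
  have "?s \<in> {..<nat(2* n)}" using k by auto
  moreover have "1 - q powi (1-n-k) * q^?s = 0"
  proof -
    have "q^?s = q powi (n + k - 1)" using k by (simp add: power_int_def)
    hence "q powi (1-n-k) * q^?s = q powi ((1-n-k) + (n+k-1))" by (simp only: powi_add[symmetric])
    thus ?thesis by simp
  qed
  ultimately have "(\<Prod>s<nat(2* n). 1 - q powi (1-n-k) * q^s) = 0"
    by (intro prod_zero) auto
  thus ?thesis unfolding Pn_formula[OF n] by simp
qed

lemma Pn_minus:
  assumes n: "0 \<le> n"
  shows "zsum (\<lambda>r. wt q r * Aq q n r * q powi (r*(-n))) = wt q n * q powi (-(n* n)) * Pq q (2* n)"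
proof -
  have "(\<Prod>s<nat(2* n). 1 - q powi (1-n-(-n)) * q^s) = qpoch q (nat (2* n))"
    unfolding qpoch_prod by simp
  thus ?thesis unfolding Pn_formula[OF n] Pq_def by simp
qed

lemma wt_sq: "wt q n * wt q n = q powi (n*(n-1))"
proof -
  have "wt q n * wt q n = q powi (choose2 n + choose2 n)"
    unfolding wt_def sgn_nat_abs powi_add by simp
  also have "choose2 n + choose2 n = n*(n-1)" using c2_2[of n] by simp
  finally show ?thesis .
qed

lemma unit_pair_le:
  assumes n: "0 \<le> n" and p: "0 \<le> p" and pn: "p \<le> n"
  shows "zsum (\<lambda>i. zsum (\<lambda>u. Aq q n i * Aq q p u * wt q (i+u))) = (if n = p then Pq q (2* p) else 0)"
proof -
  have "zsum (\<lambda>i. zsum (\<lambda>u. Aq q n i * Aq q p u * wt q (i+u))) = zsum (\<lambda>u. zsum (\<lambda>i. Aq q n i * Aq q p u * wt q (i+u)))"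
    by (rule zsum_swap[of "{-n..n}" "{-p..p}"]) (auto dest: Aq_nz)
  also have "\<dots> = zsum (\<lambda>u. Aq q p u * wt q u * zsum (\<lambda>r. wt q r * Aq q n r * q powi (r* u)))"
  proof (rule zsum_cong)
    fix u
    have "zsum (\<lambda>i. Aq q n i * Aq q p u * wt q (i+u)) = zsum (\<lambda>i. (Aq q p u * wt q u) * (wt q i * Aq q n i * q powi (i* u)))"
      by (rule zsum_cong) (simp add: wt_add algebra_simps)
    thus "zsum (\<lambda>i. Aq q n i * Aq q p u * wt q (i+u)) = Aq q p u * wt q u * zsum (\<lambda>r. wt q r * Aq q n r * q powi (r* u))"
      by (simp add: zsum_cmult)
  qed
  also have "\<dots> = (if n = p then Pq q (2* p) else 0)"
  proof (cases "n = p")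
    case False
    have "zsum (\<lambda>u. Aq q p u * wt q u * zsum (\<lambda>r. wt q r * Aq q n r * q powi (r* u))) = 0"
    proof (rule zsum_zero)
      fix u
      show "Aq q p u * wt q u * zsum (\<lambda>r. wt q r * Aq q n r * q powi (r* u)) = 0"
      proof (cases "Aq q p u = 0")
        case False
        hence "-p \<le> u \<and> u \<le> p" by (rule Aq_nz)
        hence "zsum (\<lambda>r. wt q r * Aq q n r * q powi (r* u)) = 0"
          using pn \<open>n \<noteq> p\<close> by (intro Pn_zero n) auto
        thus ?thesis by simp
      qed simp
    qed
    thus ?thesis using False by simp
  next
    case True
    have "zsum (\<lambda>u. Aq q p u * wt q u * zsum (\<lambda>r. wt q r * Aq q n r * q powi (r* u)))
        = Aq q p (-n) * wt q (-n) * zsum (\<lambda>r. wt q r * Aq q n r * q powi (r*(-n)))"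
    proof (rule zsum_single)
      fix u assume "u \<noteq> -n"
      show "Aq q p u * wt q u * zsum (\<lambda>r. wt q r * Aq q n r * q powi (r* u)) = 0"
      proof (cases "Aq q p u = 0")
        case False
        hence "-p \<le> u \<and> u \<le> p" by (rule Aq_nz)
        hence "zsum (\<lambda>r. wt q r * Aq q n r * q powi (r* u)) = 0"
          using True \<open>u \<noteq> -n\<close> by (intro Pn_zero n) auto
        thus ?thesis by simp
      qed simp
    qed
    also have "\<dots> = Pq q (2* p)"
    proof -
      have a: "Aq q p (-n) = 1" using True n by (simp add: Aq_def qbinom_def)
      have "wt q (-n) * (wt q n * q powi (-(n* n))) = q powi (n*(n-1)) * q powi n * q powi (-(n* n))"
        using wt_sq[of n] wt_uminus[of n] by (simp add: algebra_simps)
      also have "\<dots> = q powi (n*(n-1) + n + (-(n* n)))" by (simp only: powi_add[symmetric])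
      also have "n*(n-1) + n + (-(n* n)) = 0" by (simp add: algebra_simps)
      finally have "wt q (-n) * (wt q n * q powi (-(n* n))) = 1" by simp
      thus ?thesis unfolding Pn_minus[OF n] a using True by (simp add: algebra_simps)
    qed
    finally show ?thesis using True by simp
  qed
  finally show ?thesis .
qed

lemma unit_pair:
  assumes n: "0 \<le> n" and p: "0 \<le> p"
  shows "zsum (\<lambda>i. zsum (\<lambda>u. Aq q n i * Aq q p u * wt q (i+u))) = (if n = p then Pq q (2* p) else 0)"
proof (cases "p \<le> n")
  case True thus ?thesis using unit_pair_le[OF n p] by simp
next
  case False
  have "zsum (\<lambda>i. zsum (\<lambda>u. Aq q n i * Aq q p u * wt q (i+u))) = zsum (\<lambda>u. zsum (\<lambda>i. Aq q n i * Aq q p u * wt q (i+u)))"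
    by (rule zsum_swap[of "{-n..n}" "{-p..p}"]) (auto dest: Aq_nz)
  also have "\<dots> = zsum (\<lambda>u. zsum (\<lambda>i. Aq q p u * Aq q n i * wt q (u+i)))"
    by (simp add: algebra_simps)
  also have "\<dots> = 0" using unit_pair_le[OF p n] False by simp
  finally show ?thesis using False by simp
qed

end



definition Cr :: "complex \<Rightarrow> int \<Rightarrow> int \<Rightarrow> int \<Rightarrow> complex" where
  "Cr q b a k = Pq q a * Pq q b * rq q k * rq q (a-k) * rq q (b-k)"

lemma Cr_nz: "Cr q b a k \<noteq> 0 \<Longrightarrow> 0 \<le> k \<and> k \<le> a \<and> k \<le> b"
  unfolding Cr_def by (auto simp: rq_def split: if_splits)

context qc begin

lemma Ccoef:
  assumes a: "0 \<le> a" and b: "0 \<le> b"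
  shows "Cr q b (a+1) k = Cr q b a k + Cr q b a (k-1) * (1 - q powi (a+b-2* k+2)) - (1 - q powi a) * Cr q b (a-1) (k-1)"
proof (cases "a = 0")
  case True
  consider "k < 0" | "k = 0" | "k = 1" | "k \<ge> 2" by linarith
  thus ?thesis
  proof cases
    case 2
    thus ?thesis using True b Pq_rq[of 1] Pq_rq[of 0] by (simp add: Cr_def algebra_simps)
  next
    case 3
    have e1: "rq q (b-1) = (1 - q powi b) * rq q b" using rq_step[of "b-1"] by simp
    have e2: "rq q 1 = inverse (Pq q 1)" "rq q 0 = 1" "Pq q 0 = 1" by (simp_all add: rq_def Pq_def)
    have "Cr q b 1 1 = Pq q b * rq q (b-1)" by (simp add: Cr_def e2)
    moreover have "Cr q b 0 1 = 0" unfolding Cr_def by simp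
    moreover have "Cr q b 0 0 = Pq q b * rq q b" by (simp add: Cr_def e2)
    ultimately show ?thesis using True 3 unfolding e1 by (simp add: algebra_simps)
  qed (use True in \<open>auto simp: Cr_def\<close>)
next
  case False
  hence a1: "1 \<le> a" using a by simp
  define x where "x = q powi k"
  define z where "z = q powi (a+1-k)"
  define Y where "Y = q powi (b-k+1)"
  have exz: "q powi (a+1) = x* z" unfolding x_def z_def using powi_add[of k "a+1-k"] by simp
  have ezY: "q powi (a+b-2* k+2) = z* Y" unfolding Y_def z_def using powi_add[of "a+1-k" "b-k+1"] by (simp add: algebra_simps)
  have P1: "Pq q a = Pq q (a-1) * (1 - q powi a)" using Pq_step[of "a-1"] a1 by simp
  have P2: "Pq q (a+1) = Pq q (a-1) * (1 - q powi a) * (1 - x* z)" using Pq_step[of a] a P1 exz by simp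
  have rb: "rq q (b-k) = (1-Y) * rq q (b-k+1)" unfolding Y_def using rq_step[of "b-k"] by simp
  have ra: "rq q (a-k) = (1-z) * rq q (a+1-k)" unfolding z_def using rq_step[of "a-k"] by (simp add: algebra_simps)
  have rk: "rq q (k-1) = (1-x) * rq q k" unfolding x_def using rq_step[of "k-1"] by simp
  have i1: "a - (k-1) = a+1-k" "b-(k-1) = b-k+1" "a-1-(k-1) = a-k" by simp_all
  define B where "B = Pq q (a-1) * Pq q b * rq q k * rq q (a+1-k) * rq q (b-k+1)"
  have h1: "Cr q b (a+1) k = B * ((1 - q powi a)*(1 - x* z)*(1-Y))"
    unfolding Cr_def P2 rb B_def by (simp add: algebra_simps)
  have h2: "Cr q b a k = B * ((1 - q powi a)*(1-z)*(1-Y))"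
    unfolding Cr_def P1 rb ra B_def by (simp add: algebra_simps)
  have h3: "Cr q b a (k-1) = B * ((1 - q powi a)*(1-x))"
    unfolding Cr_def i1 P1 rk B_def by (simp add: algebra_simps)
  have h4: "Cr q b (a-1) (k-1) = B * ((1-x)*(1-z))"
    unfolding Cr_def i1 rk ra B_def by (simp add: algebra_simps)
  show ?thesis unfolding h1 h2 h3 h4 ezY by (simp add: algebra_simps)
qed

definition Fc :: "int \<Rightarrow> int \<Rightarrow> int \<Rightarrow> complex" where
  "Fc b a u = zsum (\<lambda>j. qbinom q a j * qbinom q b (u-j))"
definition Rc :: "int \<Rightarrow> int \<Rightarrow> int \<Rightarrow> complex" where
  "Rc b a u = zsum (\<lambda>k. Cr q b a k * qbinom q (a+b-2* k) (u-k))"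

lemma Fc_rec:
  assumes a: "0 \<le> a"
  shows "Fc b (a+1) u = Fc b a u + Fc b a (u-1) - (1 - q powi a) * Fc b (a-1) (u-1)"
proof -
  have f1: "fs (\<lambda>j. qbinom q a j * qbinom q b (u-j))" by (rule fs_ivl[of _ 0 a]) (auto dest: qbinom_nz)
  have f2: "fs (\<lambda>j. qbinom q a (j-1) * qbinom q b (u-j))" by (rule fs_ivl[of _ 1 "a+1"]) (auto dest: qbinom_nz)
  have f3: "fs (\<lambda>j. (1 - q powi a) * (qbinom q (a-1) (j-1) * qbinom q b (u-j)))" by (rule fs_ivl[of _ 1 "a"]) (auto dest: qbinom_nz)
  have "Fc b (a+1) u = zsum (\<lambda>j. (qbinom q a j * qbinom q b (u-j) + qbinom q a (j-1) * qbinom q b (u-j))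
        - (1 - q powi a) * (qbinom q (a-1) (j-1) * qbinom q b (u-j)))"
    unfolding Fc_def by (rule zsum_cong) (subst qbinom_rec[OF a], simp add: algebra_simps)
  also have "\<dots> = Fc b a u + zsum (\<lambda>j. qbinom q a (j-1) * qbinom q b (u-j)) - (1 - q powi a) * zsum (\<lambda>j. qbinom q (a-1) (j-1) * qbinom q b (u-j))"
    by (simp add: zsum_diff zsum_add f1 f2 f3 fs_add zsum_cmult Fc_def)
  also have "zsum (\<lambda>j. qbinom q a (j-1) * qbinom q b (u-j)) = Fc b a (u-1)"
    unfolding Fc_def by (subst zsum_shift[symmetric, of _ 1]) (simp add: algebra_simps)
  also have "zsum (\<lambda>j. qbinom q (a-1) (j-1) * qbinom q b (u-j)) = Fc b (a-1) (u-1)"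
    unfolding Fc_def by (subst zsum_shift[symmetric, of _ 1]) (simp add: algebra_simps)
  finally show ?thesis .
qed

lemma Rc_rec:
  assumes a: "0 \<le> a" and b: "0 \<le> b"
  shows "Rc b (a+1) u = Rc b a u + Rc b a (u-1) - (1 - q powi a) * Rc b (a-1) (u-1)"
proof -
  define X where "X = zsum (\<lambda>k. Cr q b a k * ((1 - q powi (a+b-2* k)) * qbinom q (a+b-2* k-1) (u-1-k)))"
  have t1: "\<And>k. Cr q b a k * qbinom q (a+b-2* k+1) (u-k) = Cr q b a k * qbinom q (a+b-2* k) (u-k)
      + Cr q b a k * qbinom q (a+b-2* k) (u-1-k) - Cr q b a k * ((1 - q powi (a+b-2* k)) * qbinom q (a+b-2* k-1) (u-1-k))"
  proof -
    fix k
    show "Cr q b a k * qbinom q (a+b-2* k+1) (u-k) = Cr q b a k * qbinom q (a+b-2* k) (u-k)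
      + Cr q b a k * qbinom q (a+b-2* k) (u-1-k) - Cr q b a k * ((1 - q powi (a+b-2* k)) * qbinom q (a+b-2* k-1) (u-1-k))"
    proof (cases "Cr q b a k = 0")
      case False
      hence nn: "0 \<le> a+b-2* k" using Cr_nz by fastforce
      have eq: "qbinom q (a+b-2* k+1) (u-k) = qbinom q (a+b-2* k) (u-k) + qbinom q (a+b-2* k) (u-1-k) - (1 - q powi (a+b-2* k)) * qbinom q (a+b-2* k-1) (u-1-k)"
        using qbinom_rec[OF nn, of "u-k"] by (simp add: algebra_simps)
      show ?thesis unfolding eq by (simp add: algebra_simps)
    qed simp
  qed
  have fA: "\<And>g. fs (\<lambda>k. Cr q b a k * g k)" by (rule fs_ivl[of _ 0 a]) (auto dest: Cr_nz)
  have fB: "\<And>g. fs (\<lambda>k. Cr q b a (k-1) * g k)" by (rule fs_ivl[of _ 1 "a+1"]) (auto dest: Cr_nz)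
  have fC: "\<And>g. fs (\<lambda>k. Cr q b (a-1) (k-1) * g k)" by (rule fs_ivl[of _ 1 "a"]) (auto dest: Cr_nz)
  have "Rc b (a+1) u = zsum (\<lambda>k. (Cr q b a k * qbinom q (a+b-2* k+1) (u-k)
        + Cr q b a (k-1) * ((1 - q powi (a+b-2* k+2)) * qbinom q (a+b+1-2* k) (u-k)))
        - (1 - q powi a) * (Cr q b (a-1) (k-1) * qbinom q (a+b+1-2* k) (u-k)))"
    unfolding Rc_def by (rule zsum_cong) (subst Ccoef[OF a b], simp add: algebra_simps)
  also have "\<dots> = zsum (\<lambda>k. Cr q b a k * qbinom q (a+b-2* k+1) (u-k))
        + zsum (\<lambda>k. Cr q b a (k-1) * ((1 - q powi (a+b-2* k+2)) * qbinom q (a+b+1-2* k) (u-k)))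
        - (1 - q powi a) * zsum (\<lambda>k. Cr q b (a-1) (k-1) * qbinom q (a+b+1-2* k) (u-k))"
    by (simp add: zsum_diff zsum_add fA fB fC fs_add fs_mult2 zsum_cmult)
  also have "zsum (\<lambda>k. Cr q b a k * qbinom q (a+b-2* k+1) (u-k)) = Rc b a u + Rc b a (u-1) - X"
    unfolding t1 Rc_def X_def by (simp add: zsum_diff zsum_add fA fs_add)
  also have "zsum (\<lambda>k. Cr q b a (k-1) * ((1 - q powi (a+b-2* k+2)) * qbinom q (a+b+1-2* k) (u-k))) = X"
    unfolding X_def by (subst zsum_shift[symmetric, of _ 1]) (simp add: algebra_simps)
  also have "zsum (\<lambda>k. Cr q b (a-1) (k-1) * qbinom q (a+b+1-2* k) (u-k)) = Rc b (a-1) (u-1)"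
    unfolding Rc_def by (subst zsum_shift[symmetric, of _ 1]) (simp add: algebra_simps)
  finally show ?thesis by simp
qed

lemma carlitz_0:
  assumes b: "0 \<le> b"
  shows "Fc b 0 u = Rc b 0 u"
proof -
  have "Fc b 0 u = qbinom q 0 0 * qbinom q b (u-0)"
    unfolding Fc_def by (rule zsum_single) (auto simp: qbinom_def)
  moreover have "Rc b 0 u = Cr q b 0 0 * qbinom q (0+b-2*0) (u-0)"
    unfolding Rc_def
  proof (rule zsum_single)
    fix x :: int assume "x \<noteq> 0"
    have "Cr q b 0 x = 0"
    proof (rule ccontr)
      assume "Cr q b 0 x \<noteq> 0"
      hence "0 \<le> x \<and> x \<le> 0" by (auto dest: Cr_nz)
      with \<open>x \<noteq> 0\<close> show False by simp
    qed
    thus "Cr q b 0 x * qbinom q (0 + b - 2 * x) (u - x) = 0" by simp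
  qed
  moreover have "Cr q b 0 0 = 1" using b Pq_rq[of b] by (simp add: Cr_def Pq_def rq_def)
  ultimately show ?thesis by (simp add: qbinom_def)
qed

lemma carlitz:
  assumes b: "0 \<le> b"
  shows "Fc b (int n) u = Rc b (int n) u"
proof -
  have "(\<forall>u. Fc b (int n) u = Rc b (int n) u) \<and> (\<forall>u. Fc b (int n + 1) u = Rc b (int n + 1) u)"
  proof (induction n)
    case 0
    have "\<forall>u. Fc b 1 u = Rc b 1 u"
      using Fc_rec[of 0 b] Rc_rec[of 0 b] carlitz_0[OF b] b by simp
    thus ?case using carlitz_0[OF b] by simp
  next
    case (Suc n)
    have X: "\<forall>u. Fc b (int n + 1 + 1) u = Rc b (int n + 1 + 1) u"
    proof
      fix u
      show "Fc b (int n + 1 + 1) u = Rc b (int n + 1 + 1) u"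
        using Fc_rec[of "int n + 1" b u] Rc_rec[of "int n + 1" b u] Suc.IH b by simp
    qed
    have e: "int (Suc n) = int n + 1" by simp
    show ?case unfolding e using Suc.IH X by blast
  qed
  thus ?thesis by simp
qed

end



context qc begin

lemma powi_comb: "a + b = c \<Longrightarrow> q powi a * q powi b = q powi c"
  using powi_add[of a b] by simp

lemma rq_Suc: "rq q (n+1) * (1 - q powi (n+1)) = rq q n"
  using rq_step[of n] by (simp add: algebra_simps)

lemma rq_pascal: "(1 - q powi (m+1)) * (rq q t * rq q (m+1-t)) = q powi t * rq q t * rq q (m-t) + rq q (t-1) * rq q (m+1-t)"
proof -
  have e1: "rq q (m-t) = (1 - q powi (m+1-t)) * rq q (m+1-t)" using rq_step[of "m-t"] by (simp add: algebra_simps)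
  have e2: "rq q (t-1) = (1 - q powi t) * rq q t" using rq_step[of "t-1"] by simp
  have e3: "q powi (m+1) = q powi t * q powi (m+1-t)" using powi_comb[of t "m+1-t" "m+1"] by simp
  show ?thesis unfolding e1 e2 e3 by (simp add: algebra_simps)
qed

lemma one_minus_powi_nz: "0 < n \<Longrightarrow> 1 - q powi n \<noteq> 0"
  using qpow_ne1[of "nat n"] by (simp add: power_int_def)

definition S6 :: "nat \<Rightarrow> int \<Rightarrow> complex" where
  "S6 n c = zsum (\<lambda>t. q powi (t* t + c* t) * rq q t * rq q (int n - t) * rq q (c+t))"

lemma S6_step: "(1 - q powi (int n + 1)) * S6 (Suc n) c = S6 n (c+1)"
proof -
  define m where "m = int n"
  have fA: "fs (\<lambda>t. q powi (t* t+c* t) * q powi t * rq q t * rq q (m-t) * rq q (c+t))"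
    by (rule fs_ivl[of _ 0 m]) (auto simp: rq_def split: if_splits)
  have fB: "fs (\<lambda>t. q powi (t* t+c* t) * rq q (t-1) * rq q (m+1-t) * rq q (c+t))"
    by (rule fs_ivl[of _ 1 "m+1"]) (auto simp: rq_def split: if_splits)
  have "(1 - q powi (m + 1)) * S6 (Suc n) c = zsum (\<lambda>t. q powi (t* t+c* t) * q powi t * rq q t * rq q (m-t) * rq q (c+t)
       + q powi (t* t+c* t) * rq q (t-1) * rq q (m+1-t) * rq q (c+t))"
    unfolding S6_def zsum_cmult[symmetric]
  proof (rule zsum_cong)
    fix t
    have "int (Suc n) - t = m + 1 - t" unfolding m_def by simp
    hence "(1 - q powi (m + 1)) * (q powi (t* t + c* t) * rq q t * rq q (int (Suc n) - t) * rq q (c+t))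
      = (q powi (t* t + c* t) * rq q (c+t)) * ((1 - q powi (m + 1)) * (rq q t * rq q (m+1-t)))" by (simp add: algebra_simps)
    also have "\<dots> = (q powi (t* t + c* t) * rq q (c+t)) * (q powi t * rq q t * rq q (m-t) + rq q (t-1) * rq q (m+1-t))"
      by (simp only: rq_pascal)
    also have "\<dots> = q powi (t* t+c* t) * q powi t * rq q t * rq q (m-t) * rq q (c+t) + q powi (t* t+c* t) * rq q (t-1) * rq q (m+1-t) * rq q (c+t)"
      by (simp add: algebra_simps)
    finally show "(1 - q powi (m + 1)) * (q powi (t* t + c* t) * rq q t * rq q (int (Suc n) - t) * rq q (c+t))
      = q powi (t* t+c* t) * q powi t * rq q t * rq q (m-t) * rq q (c+t) + q powi (t* t+c* t) * rq q (t-1) * rq q (m+1-t) * rq q (c+t)" .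
  qed
  also have "\<dots> = zsum (\<lambda>t. q powi (t* t+c* t) * q powi t * rq q t * rq q (m-t) * rq q (c+t))
      + zsum (\<lambda>t. q powi (t* t+c* t) * rq q (t-1) * rq q (m+1-t) * rq q (c+t))"
    by (rule zsum_add[OF fA fB])
  also have "zsum (\<lambda>t. q powi (t* t+c* t) * rq q (t-1) * rq q (m+1-t) * rq q (c+t))
      = zsum (\<lambda>s. q powi ((s+1)*(s+1)+c*(s+1)) * rq q (s+1-1) * rq q (m+1-(s+1)) * rq q (c+(s+1)))"
    by (rule zsum_shift[symmetric])
  also have "zsum (\<lambda>t. q powi (t* t+c* t) * q powi t * rq q t * rq q (m-t) * rq q (c+t))
      + zsum (\<lambda>s. q powi ((s+1)*(s+1)+c*(s+1)) * rq q (s+1-1) * rq q (m+1-(s+1)) * rq q (c+(s+1)))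
      = zsum (\<lambda>s. q powi (s* s+c* s) * q powi s * rq q s * rq q (m-s) * rq q (c+s)
      + q powi ((s+1)*(s+1)+c*(s+1)) * rq q (s+1-1) * rq q (m+1-(s+1)) * rq q (c+(s+1)))"
    by (rule zsum_add[symmetric, OF fA]) (rule fs_ivl[of _ 0 m], auto simp: rq_def split: if_splits)
  also have "\<dots> = S6 n (c+1)"
    unfolding S6_def m_def[symmetric]
  proof (rule zsum_cong)
    fix s
    have p1: "q powi (s* s+c* s) * q powi s = q powi (s* s + (c+1)* s)" by (rule powi_comb) (simp add: algebra_simps)
    have p2: "q powi ((s+1)*(s+1)+c*(s+1)) = q powi (s* s + (c+1)* s) * q powi (c+s+1)"
      by (rule powi_comb[symmetric]) (simp add: algebra_simps)
    have r1: "rq q (c+s) = (1 - q powi (c+s+1)) * rq q (c+s+1)" using rq_step[of "c+s"] by simp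
    have a1: "s+1-1 = s" "m+1-(s+1) = m-s" "c+(s+1) = c+s+1" "c+1+s = c+s+1" by simp_all
    show "q powi (s* s+c* s) * q powi s * rq q s * rq q (m-s) * rq q (c+s)
      + q powi ((s+1)*(s+1)+c*(s+1)) * rq q (s+1-1) * rq q (m+1-(s+1)) * rq q (c+(s+1))
      = q powi (s* s + (c+1)* s) * rq q s * rq q (m-s) * rq q (c+1+s)"
      unfolding a1 r1 p2 mult.assoc[symmetric] p1 by (simp add: algebra_simps)
  qed
  finally show ?thesis unfolding m_def .
qed

lemma S6_eq: "S6 n c = rq q (int n) * rq q (c + int n)"
proof (induction n arbitrary: c)
  case 0
  have "S6 0 c = q powi (0*0 + c*0) * rq q 0 * rq q (int 0 - 0) * rq q (c+0)"
    unfolding S6_def by (rule zsum_single) (auto simp: rq_def)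
  thus ?case by (simp add: rq_def)
next
  case (Suc n)
  have nz: "1 - q powi (int n + 1) \<noteq> 0" by (rule one_minus_powi_nz) simp
  have "(1 - q powi (int n + 1)) * S6 (Suc n) c = rq q (int n) * rq q (c + 1 + int n)"
    using S6_step Suc.IH by simp
  also have "\<dots> = (1 - q powi (int n + 1)) * (rq q (int (Suc n)) * rq q (c + int (Suc n)))"
  proof -
    have e: "int (Suc n) = int n + 1" "c + 1 + int n = c + (int n + 1)" by simp_all
    show ?thesis unfolding e rq_step[of "int n"] by (simp add: algebra_simps)
  qed
  finally show ?case using nz by simp
qed

definition S7 :: "int \<Rightarrow> nat \<Rightarrow> int \<Rightarrow> complex" where
  "S7 K n c = zsum (\<lambda>t. q powi (t* t + c* t) * rq q t * rq q (int n - t) * rq q (K-t) * rq q (c+t))"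

lemma S7_step: "(1 - q powi (int n + 1)) * S7 K (Suc n) c = (1 - q powi (c+K+1)) * S7 K n (c+1)"
proof -
  define m where "m = int n"
  have fA: "fs (\<lambda>t. q powi (t* t+c* t) * q powi t * rq q t * rq q (m-t) * rq q (K-t) * rq q (c+t))"
    by (rule fs_ivl[of _ 0 m]) (auto simp: rq_def split: if_splits)
  have fB: "fs (\<lambda>t. q powi (t* t+c* t) * rq q (t-1) * rq q (m+1-t) * rq q (K-t) * rq q (c+t))"
    by (rule fs_ivl[of _ 1 "m+1"]) (auto simp: rq_def split: if_splits)
  have "(1 - q powi (m + 1)) * S7 K (Suc n) c = zsum (\<lambda>t. q powi (t* t+c* t) * q powi t * rq q t * rq q (m-t) * rq q (K-t) * rq q (c+t)
       + q powi (t* t+c* t) * rq q (t-1) * rq q (m+1-t) * rq q (K-t) * rq q (c+t))"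
    unfolding S7_def zsum_cmult[symmetric]
  proof (rule zsum_cong)
    fix t
    have "int (Suc n) - t = m + 1 - t" unfolding m_def by simp
    hence "(1 - q powi (m + 1)) * (q powi (t* t + c* t) * rq q t * rq q (int (Suc n) - t) * rq q (K-t) * rq q (c+t))
      = (q powi (t* t + c* t) * rq q (K-t) * rq q (c+t)) * ((1 - q powi (m + 1)) * (rq q t * rq q (m+1-t)))" by (simp add: algebra_simps)
    also have "\<dots> = (q powi (t* t + c* t) * rq q (K-t) * rq q (c+t)) * (q powi t * rq q t * rq q (m-t) + rq q (t-1) * rq q (m+1-t))"
      by (simp only: rq_pascal)
    also have "\<dots> = q powi (t* t+c* t) * q powi t * rq q t * rq q (m-t) * rq q (K-t) * rq q (c+t) + q powi (t* t+c* t) * rq q (t-1) * rq q (m+1-t) * rq q (K-t) * rq q (c+t)"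
      by (simp add: algebra_simps)
    finally show "(1 - q powi (m + 1)) * (q powi (t* t + c* t) * rq q t * rq q (int (Suc n) - t) * rq q (K-t) * rq q (c+t))
      = q powi (t* t+c* t) * q powi t * rq q t * rq q (m-t) * rq q (K-t) * rq q (c+t) + q powi (t* t+c* t) * rq q (t-1) * rq q (m+1-t) * rq q (K-t) * rq q (c+t)" .
  qed
  also have "\<dots> = zsum (\<lambda>t. q powi (t* t+c* t) * q powi t * rq q t * rq q (m-t) * rq q (K-t) * rq q (c+t))
      + zsum (\<lambda>t. q powi (t* t+c* t) * rq q (t-1) * rq q (m+1-t) * rq q (K-t) * rq q (c+t))"
    by (rule zsum_add[OF fA fB])
  also have "zsum (\<lambda>t. q powi (t* t+c* t) * rq q (t-1) * rq q (m+1-t) * rq q (K-t) * rq q (c+t))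
      = zsum (\<lambda>s. q powi ((s+1)*(s+1)+c*(s+1)) * rq q (s+1-1) * rq q (m+1-(s+1)) * rq q (K-(s+1)) * rq q (c+(s+1)))"
    by (rule zsum_shift[symmetric])
  also have "zsum (\<lambda>t. q powi (t* t+c* t) * q powi t * rq q t * rq q (m-t) * rq q (K-t) * rq q (c+t))
      + zsum (\<lambda>s. q powi ((s+1)*(s+1)+c*(s+1)) * rq q (s+1-1) * rq q (m+1-(s+1)) * rq q (K-(s+1)) * rq q (c+(s+1)))
      = zsum (\<lambda>s. q powi (s* s+c* s) * q powi s * rq q s * rq q (m-s) * rq q (K-s) * rq q (c+s)
      + q powi ((s+1)*(s+1)+c*(s+1)) * rq q (s+1-1) * rq q (m+1-(s+1)) * rq q (K-(s+1)) * rq q (c+(s+1)))"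
    by (rule zsum_add[symmetric, OF fA]) (rule fs_ivl[of _ 0 m], auto simp: rq_def split: if_splits)
  also have "\<dots> = (1 - q powi (c+K+1)) * S7 K n (c+1)"
    unfolding S7_def m_def[symmetric] zsum_cmult[symmetric]
  proof (rule zsum_cong)
    fix s
    have p1: "q powi (s* s+c* s) * q powi s = q powi (s* s + (c+1)* s)" by (rule powi_comb) (simp add: algebra_simps)
    have p2: "q powi ((s+1)*(s+1)+c*(s+1)) = q powi (s* s + (c+1)* s) * q powi (c+s+1)"
      by (rule powi_comb[symmetric]) (simp add: algebra_simps)
    have p3: "q powi (c+K+1) = q powi (c+s+1) * q powi (K-s)"
      by (rule powi_comb[symmetric]) (simp add: algebra_simps)
    have r1: "rq q (c+s) = (1 - q powi (c+s+1)) * rq q (c+s+1)" using rq_step[of "c+s"] by simp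
    have r2: "rq q (K-s-1) = (1 - q powi (K-s)) * rq q (K-s)" using rq_step[of "K-s-1"] by simp
    have a1: "s+1-1 = s" "m+1-(s+1) = m-s" "c+(s+1) = c+s+1" "c+1+s = c+s+1" "K-(s+1) = K-s-1" by simp_all
    show "q powi (s* s+c* s) * q powi s * rq q s * rq q (m-s) * rq q (K-s) * rq q (c+s)
      + q powi ((s+1)*(s+1)+c*(s+1)) * rq q (s+1-1) * rq q (m+1-(s+1)) * rq q (K-(s+1)) * rq q (c+(s+1))
      = (1 - q powi (c+K+1)) * (q powi (s* s + (c+1)* s) * rq q s * rq q (m-s) * rq q (K-s) * rq q (c+1+s))"
      unfolding a1 r1 r2 p2 p3 mult.assoc[symmetric] p1 by (simp add: algebra_simps)
  qed
  finally show ?thesis unfolding m_def .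
qed

lemma S7_eq:
  assumes c: "0 \<le> c" and K: "0 \<le> K"
  shows "S7 K n c = rq q (int n) * rq q K * Pq q (c + int n + K) * rq q (c + int n) * rq q (c+K)"
  using c
proof (induction n arbitrary: c)
  case 0
  have "S7 K 0 c = q powi (0*0 + c*0) * rq q 0 * rq q (int 0 - 0) * rq q (K-0) * rq q (c+0)"
    unfolding S7_def by (rule zsum_single) (auto simp: rq_def)
  moreover have "Pq q (c+K) * rq q (c+K) = 1" using 0 K by (intro Pq_rq) simp
  ultimately show ?case by (simp add: rq_def algebra_simps)
next
  case (Suc n)
  have nz: "1 - q powi (int n + 1) \<noteq> 0" by (rule one_minus_powi_nz) simp
  have "(1 - q powi (int n + 1)) * S7 K (Suc n) c = (1 - q powi (c+K+1)) * (rq q (int n) * rq q K * Pq q (c + 1 + int n + K) * rq q (c + 1 + int n) * rq q (c+1+K))"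
    using S7_step Suc.IH[of "c+1"] Suc.prems by simp
  also have "\<dots> = (1 - q powi (int n + 1)) * (rq q (int (Suc n)) * rq q K * Pq q (c + int (Suc n) + K) * rq q (c + int (Suc n)) * rq q (c+K))"
  proof -
    have e: "int (Suc n) = int n + 1" "c + 1 + int n + K = c + (int n + 1) + K" "c + 1 + int n = c + (int n + 1)" "c+1+K = c+K+1" by simp_all
    show ?thesis unfolding e rq_step[of "int n"] rq_step[of "c+K"] by (simp add: algebra_simps)
  qed
  finally show ?case using nz by simp
qed

end



context qc begin

lemma Aq_rq: "0 \<le> n \<Longrightarrow> Aq q n i = Pq q (2* n) * rq q (n-i) * rq q (n+i)"
  unfolding Aq_def by (subst qbinom_rq) (auto simp: algebra_simps)

lemma rq_Pq: "0 \<le> n \<Longrightarrow> rq q n * Pq q n = 1"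
  using Pq_rq[of n] by (simp add: mult.commute)

lemma expand_L_pos:
  assumes L: "0 \<le> L" and i: "0 \<le> i"
  shows "q powi (i* i) * Aq q L i = zsum (\<lambda>n. q powi (n* n) * Pq q (2* L) * rq q (L-n) * rq q (n-i) * rq q (n+i))"
proof -
  have "zsum (\<lambda>n. q powi (n* n) * Pq q (2* L) * rq q (L-n) * rq q (n-i) * rq q (n+i))
      = zsum (\<lambda>t. q powi ((t+i)*(t+i)) * Pq q (2* L) * rq q (L-(t+i)) * rq q (t+i-i) * rq q (t+i+i))"
    by (rule zsum_shift[symmetric])
  also have "\<dots> = zsum (\<lambda>t. (q powi (i* i) * Pq q (2* L)) * (q powi (t* t + (2* i)* t) * rq q t * rq q ((L-i) - t) * rq q (2* i + t)))"
  proof (rule zsum_cong)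
    fix t
    have "q powi ((t+i)*(t+i)) = q powi (i* i) * q powi (t* t + (2* i)* t)"
      by (rule powi_comb[symmetric]) (simp add: algebra_simps)
    moreover have "L-(t+i) = (L-i) - t" "t+i-i = t" "t+i+i = 2* i+t" by simp_all
    ultimately show "q powi ((t+i)*(t+i)) * Pq q (2* L) * rq q (L-(t+i)) * rq q (t+i-i) * rq q (t+i+i)
        = (q powi (i* i) * Pq q (2* L)) * (q powi (t* t + (2* i)* t) * rq q t * rq q ((L-i) - t) * rq q (2* i + t))"
      by (simp add: algebra_simps)
  qed
  also have "\<dots> = q powi (i* i) * Aq q L i"
  proof (cases "0 \<le> L - i")
    case True
    have "zsum (\<lambda>t. q powi (t* t + (2* i)* t) * rq q t * rq q ((L-i) - t) * rq q (2* i + t)) = S6 (nat (L-i)) (2* i)"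
      unfolding S6_def using True by simp
    also have "\<dots> = rq q (L-i) * rq q (L+i)" unfolding S6_eq using True by (simp add: algebra_simps)
    finally show ?thesis unfolding zsum_cmult using Aq_rq[OF L, of i] by (simp add: algebra_simps)
  next
    case False
    have "zsum (\<lambda>t. q powi (t* t + (2* i)* t) * rq q t * rq q ((L-i) - t) * rq q (2* i + t)) = 0"
      using False by (intro zsum_zero) (simp add: rq_def)
    moreover have "Aq q L i = 0" using False Aq_nz[of q L i] by auto
    ultimately show ?thesis unfolding zsum_cmult by simp
  qed
  finally show ?thesis by simp
qed

lemma Aq_sym: "Aq q n (-i) = Aq q n i"
proof (cases "0 \<le> n")
  case True
  show ?thesis unfolding Aq_rq[OF True] by (simp add: algebra_simps)
next
  case False thus ?thesis by (simp add: Aq_def qbinom_neg_top)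
qed

lemma expand_L:
  assumes L: "0 \<le> L"
  shows "q powi (i* i) * Aq q L i = zsum (\<lambda>n. q powi (n* n) * Pq q (2* L) * rq q (L-n) * rq q (n-i) * rq q (n+i))"
proof (cases "0 \<le> i")
  case True thus ?thesis by (rule expand_L_pos[OF L])
next
  case False
  hence "q powi ((-i)*(-i)) * Aq q L (-i) = zsum (\<lambda>n. q powi (n* n) * Pq q (2* L) * rq q (L-n) * rq q (n-(-i)) * rq q (n+(-i)))"
    by (intro expand_L_pos[OF L]) simp
  thus ?thesis unfolding Aq_sym by (simp add: algebra_simps)
qed

definition gam :: "int \<Rightarrow> int \<Rightarrow> int \<Rightarrow> complex" where
  "gam M N p = Pq q (2* M) * Pq q (2* N) * rq q (M+N-p) * rq q (M-N+p) * rq q (N-M+p)"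

lemma gam_nz: "gam M N p \<noteq> 0 \<Longrightarrow> 0 \<le> p \<and> p \<le> M+N"
  unfolding gam_def by (auto simp: rq_def split: if_splits)

lemma carl2:
  assumes M: "0 \<le> M" and N: "0 \<le> N"
  shows "zsum (\<lambda>j. Aq q M j * Aq q N (u-j)) = zsum (\<lambda>p. gam M N p * Aq q p u)"
proof -
  have "zsum (\<lambda>j. Aq q M j * Aq q N (u-j)) = zsum (\<lambda>j. (\<lambda>j'. qbinom q (2* M) j' * qbinom q (2* N) ((M+N-u) - j')) (M - j))"
    unfolding Aq_def by (rule zsum_cong) (simp add: algebra_simps)
  also have "\<dots> = Fc (2* N) (2* M) (M+N-u)" unfolding Fc_def by (rule zsum_reflect)
  also have "\<dots> = Fc (2* N) (int (nat (2* M))) (M+N-u)" using M by simp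
  also have "\<dots> = Rc (2* N) (int (nat (2* M))) (M+N-u)" by (rule carlitz) (use N in simp)
  also have "\<dots> = Rc (2* N) (2* M) (M+N-u)" using M by simp
  also have "\<dots> = zsum (\<lambda>p. (\<lambda>k. Cr q (2* N) (2* M) k * qbinom q (2* M+2* N-2* k) ((M+N-u)-k)) (M+N-p))"
    unfolding Rc_def by (rule zsum_reflect[symmetric])
  also have "\<dots> = zsum (\<lambda>p. gam M N p * Aq q p u)"
  proof (rule zsum_cong)
    fix p
    have "2* M - (M+N-p) = M-N+p" "2* N - (M+N-p) = N-M+p" "2* M+2* N-2*(M+N-p) = 2* p" "M+N-u-(M+N-p) = p-u" by simp_all
    thus "(\<lambda>k. Cr q (2* N) (2* M) k * qbinom q (2* M+2* N-2* k) ((M+N-u)-k)) (M+N-p) = gam M N p * Aq q p u"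
      unfolding Cr_def gam_def Aq_def by (simp add: algebra_simps)
  qed
  finally show ?thesis .
qed

lemma G_eq:
  assumes M: "0 \<le> M" and N: "0 \<le> N"
  shows "zsum (\<lambda>j. zsum (\<lambda>k. Aq q M j * Aq q N k * wt q (i+j+k))) = zsum (\<lambda>p. gam M N p * zsum (\<lambda>u. Aq q p u * wt q (i+u)))"
proof -
  have "zsum (\<lambda>j. zsum (\<lambda>k. Aq q M j * Aq q N k * wt q (i+j+k))) = zsum (\<lambda>j. zsum (\<lambda>u. Aq q M j * Aq q N (u-j) * wt q (i+u)))"
  proof (rule zsum_cong)
    fix j
    have "zsum (\<lambda>k. Aq q M j * Aq q N k * wt q (i+j+k)) = zsum (\<lambda>u. (\<lambda>k. Aq q M j * Aq q N k * wt q (i+j+k)) (u + (-j)))"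
      by (rule zsum_shift[symmetric])
    thus "zsum (\<lambda>k. Aq q M j * Aq q N k * wt q (i+j+k)) = zsum (\<lambda>u. Aq q M j * Aq q N (u-j) * wt q (i+u))"
      by (simp add: algebra_simps)
  qed
  also have "\<dots> = zsum (\<lambda>u. zsum (\<lambda>j. Aq q M j * Aq q N (u-j) * wt q (i+u)))"
    by (rule zsum_swap[of "{-M..M}" "{-(M+N)..M+N}"]) (auto dest!: Aq_nz)
  also have "\<dots> = zsum (\<lambda>u. zsum (\<lambda>p. gam M N p * Aq q p u * wt q (i+u)))"
  proof (rule zsum_cong)
    fix u
    have "zsum (\<lambda>j. Aq q M j * Aq q N (u-j) * wt q (i+u)) = zsum (\<lambda>j. Aq q M j * Aq q N (u-j)) * wt q (i+u)"
      by (rule zsum_multc)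
    also have "\<dots> = zsum (\<lambda>p. gam M N p * Aq q p u) * wt q (i+u)" unfolding carl2[OF M N] ..
    also have "\<dots> = zsum (\<lambda>p. gam M N p * Aq q p u * wt q (i+u))" by (rule zsum_multc[symmetric])
    finally show "zsum (\<lambda>j. Aq q M j * Aq q N (u-j) * wt q (i+u)) = zsum (\<lambda>p. gam M N p * Aq q p u * wt q (i+u))" .
  qed
  also have "\<dots> = zsum (\<lambda>p. zsum (\<lambda>u. gam M N p * Aq q p u * wt q (i+u)))"
  proof (rule zsum_swap[of "{-(M+N)..M+N}" "{0..M+N}"])
    fix u p assume "gam M N p * Aq q p u * wt q (i+u) \<noteq> 0"
    hence "gam M N p \<noteq> 0" "Aq q p u \<noteq> 0" by auto
    from gam_nz[OF this(1)] Aq_nz[OF this(2)] show "u \<in> {-(M+N)..M+N} \<and> p \<in> {0..M+N}" by auto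
  qed auto
  also have "\<dots> = zsum (\<lambda>p. gam M N p * zsum (\<lambda>u. Aq q p u * wt q (i+u)))"
    by (rule zsum_cong) (simp add: zsum_cmult[symmetric] mult.assoc)
  finally show ?thesis .
qed

end



lemma zsum_const0[simp]: "zsum (\<lambda>x. 0) = 0" by (simp add: zsum_def)

context qc begin

lemma T_eq:
  assumes L: "0 \<le> L" and M: "0 \<le> M" and N: "0 \<le> N"
  shows "zsum (\<lambda>i. zsum (\<lambda>j. zsum (\<lambda>k. q powi (i* i) * Aq q L i * Aq q M j * Aq q N k * wt q (i+j+k))))
       = zsum (\<lambda>n. q powi (n* n) * Pq q (2* L) * rq q (L-n) * gam M N n)"
proof -
  define cc where "cc n = (if 0 \<le> n then q powi (n* n) * Pq q (2* L) * rq q (L-n) * rq q (2* n) else 0)" for n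
  define H where "H p i = zsum (\<lambda>u. Aq q p u * wt q (i+u))" for p i
  have cc_nz: "cc n \<noteq> 0 \<Longrightarrow> 0 \<le> n \<and> n \<le> L" for n
    unfolding cc_def by (auto simp: rq_def split: if_splits)
  have ex: "q powi (i* i) * Aq q L i = zsum (\<lambda>n. cc n * Aq q n i)" for i
    unfolding expand_L[OF L]
  proof (rule zsum_cong)
    fix n
    show "q powi (n* n) * Pq q (2* L) * rq q (L-n) * rq q (n-i) * rq q (n+i) = cc n * Aq q n i"
    proof (cases "0 \<le> n")
      case True
      have "cc n * Aq q n i = (q powi (n* n) * Pq q (2* L) * rq q (L-n) * rq q (n-i) * rq q (n+i)) * (rq q (2* n) * Pq q (2* n))"
        unfolding cc_def Aq_rq[OF True] using True by (simp add: algebra_simps)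
      thus ?thesis using rq_Pq[of "2* n"] True by simp
    next
      case False
      hence z: "rq q (n-i) * rq q (n+i) = 0" by (auto simp: rq_def)
      have e: "q powi (n* n) * Pq q (2* L) * rq q (L-n) * rq q (n-i) * rq q (n+i) = (q powi (n* n) * Pq q (2* L) * rq q (L-n)) * (rq q (n-i) * rq q (n+i))"
        by (simp only: mult.assoc)
      show ?thesis unfolding e z cc_def using False by simp
    qed
  qed
  have "zsum (\<lambda>i. zsum (\<lambda>j. zsum (\<lambda>k. q powi (i* i) * Aq q L i * Aq q M j * Aq q N k * wt q (i+j+k))))
      = zsum (\<lambda>i. (q powi (i* i) * Aq q L i) * zsum (\<lambda>j. zsum (\<lambda>k. Aq q M j * Aq q N k * wt q (i+j+k))))"
  proof (rule zsum_cong)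
    fix i
    have "zsum (\<lambda>j. zsum (\<lambda>k. q powi (i* i) * Aq q L i * Aq q M j * Aq q N k * wt q (i+j+k)))
        = zsum (\<lambda>j. (q powi (i* i) * Aq q L i) * zsum (\<lambda>k. Aq q M j * Aq q N k * wt q (i+j+k)))"
      by (rule zsum_cong) (simp add: zsum_cmult[symmetric] mult.assoc)
    thus "zsum (\<lambda>j. zsum (\<lambda>k. q powi (i* i) * Aq q L i * Aq q M j * Aq q N k * wt q (i+j+k)))
        = (q powi (i* i) * Aq q L i) * zsum (\<lambda>j. zsum (\<lambda>k. Aq q M j * Aq q N k * wt q (i+j+k)))"
      by (simp add: zsum_cmult)
  qed
  also have "\<dots> = zsum (\<lambda>i. zsum (\<lambda>n. cc n * Aq q n i) * zsum (\<lambda>p. gam M N p * H p i))"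
    unfolding ex G_eq[OF M N] H_def ..
  also have "\<dots> = zsum (\<lambda>i. zsum (\<lambda>n. zsum (\<lambda>p. cc n * Aq q n i * (gam M N p * H p i))))"
  proof (rule zsum_cong)
    fix i
    have "zsum (\<lambda>n. cc n * Aq q n i) * zsum (\<lambda>p. gam M N p * H p i) = zsum (\<lambda>n. cc n * Aq q n i * zsum (\<lambda>p. gam M N p * H p i))"
      by (rule zsum_multc[symmetric])
    also have "\<dots> = zsum (\<lambda>n. zsum (\<lambda>p. cc n * Aq q n i * (gam M N p * H p i)))"
      by (rule zsum_cong) (rule zsum_cmult[symmetric])
    finally show "zsum (\<lambda>n. cc n * Aq q n i) * zsum (\<lambda>p. gam M N p * H p i) = zsum (\<lambda>n. zsum (\<lambda>p. cc n * Aq q n i * (gam M N p * H p i)))" .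
  qed
  also have "\<dots> = zsum (\<lambda>n. zsum (\<lambda>i. zsum (\<lambda>p. cc n * Aq q n i * (gam M N p * H p i))))"
  proof (rule zsum_swap[of "{-L..L}" "{0..L}"])
    fix i n assume "zsum (\<lambda>p. cc n * Aq q n i * (gam M N p * H p i)) \<noteq> 0"
    hence "cc n \<noteq> 0" "Aq q n i \<noteq> 0" by (auto simp: zsum_def)
    from cc_nz[OF this(1)] Aq_nz[OF this(2)] show "i \<in> {-L..L} \<and> n \<in> {0..L}" by auto
  qed auto
  also have "\<dots> = zsum (\<lambda>n. zsum (\<lambda>p. zsum (\<lambda>i. cc n * Aq q n i * (gam M N p * H p i))))"
  proof (rule zsum_cong)
    fix n
    show "zsum (\<lambda>i. zsum (\<lambda>p. cc n * Aq q n i * (gam M N p * H p i))) = zsum (\<lambda>p. zsum (\<lambda>i. cc n * Aq q n i * (gam M N p * H p i)))"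
    proof (rule zsum_swap[of "{-L..L}" "{0..M+N}"])
      fix i p assume "cc n * Aq q n i * (gam M N p * H p i) \<noteq> 0"
      hence "cc n \<noteq> 0" "Aq q n i \<noteq> 0" "gam M N p \<noteq> 0" by auto
      from cc_nz[OF this(1)] Aq_nz[OF this(2)] gam_nz[OF this(3)] show "i \<in> {-L..L} \<and> p \<in> {0..M+N}" by auto
    qed auto
  qed
  also have "\<dots> = zsum (\<lambda>n. cc n * gam M N n * Pq q (2* n))"
  proof (rule zsum_cong)
    fix n
    have inner: "zsum (\<lambda>i. cc n * Aq q n i * (gam M N p * H p i)) = cc n * gam M N p * (if n = p then Pq q (2* p) else 0)"
      if "cc n \<noteq> 0" "gam M N p \<noteq> 0" for p
    proof -
      have n0: "0 \<le> n" using cc_nz[OF that(1)] by simp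
      have p0: "0 \<le> p" using gam_nz[OF that(2)] by simp
      have "zsum (\<lambda>i. cc n * Aq q n i * (gam M N p * H p i)) = (cc n * gam M N p) * zsum (\<lambda>i. zsum (\<lambda>u. Aq q n i * Aq q p u * wt q (i+u)))"
        unfolding zsum_cmult[symmetric] H_def by (rule zsum_cong) (simp add: zsum_cmult[symmetric] algebra_simps)
      thus ?thesis unfolding unit_pair[OF n0 p0] by simp
    qed
    show "zsum (\<lambda>p. zsum (\<lambda>i. cc n * Aq q n i * (gam M N p * H p i))) = cc n * gam M N n * Pq q (2* n)"
    proof (cases "cc n \<noteq> 0 \<and> gam M N n \<noteq> 0")
      case True
      have "zsum (\<lambda>p. zsum (\<lambda>i. cc n * Aq q n i * (gam M N p * H p i))) = zsum (\<lambda>i. cc n * Aq q n i * (gam M N n * H n i))"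
      proof (rule zsum_single)
        fix p assume "p \<noteq> n"
        show "zsum (\<lambda>i. cc n * Aq q n i * (gam M N p * H p i)) = 0"
        proof (cases "gam M N p = 0")
          case False thus ?thesis using inner[of p] True \<open>p \<noteq> n\<close> by simp
        qed simp
      qed
      also have "\<dots> = cc n * gam M N n * Pq q (2* n)" using inner[of n] True by simp
      finally show ?thesis .
    next
      case False
      hence z: "cc n = 0 \<or> gam M N n = 0" by simp
      show ?thesis
      proof (cases "cc n = 0")
        case True thus ?thesis by (simp add: zsum_def)
      next
        case False
        hence g: "gam M N n = 0" using z by simp
        have "zsum (\<lambda>p. zsum (\<lambda>i. cc n * Aq q n i * (gam M N p * H p i))) = 0"
        proof (rule zsum_zero)
          fix p show "zsum (\<lambda>i. cc n * Aq q n i * (gam M N p * H p i)) = 0"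
          proof (cases "gam M N p = 0")
            case False
            hence "p \<noteq> n" using g by auto
            thus ?thesis using inner[of p] False \<open>cc n \<noteq> 0\<close> by simp
          qed simp
        qed
        thus ?thesis using g by simp
      qed
    qed
  qed
  also have "\<dots> = zsum (\<lambda>n. q powi (n* n) * Pq q (2* L) * rq q (L-n) * gam M N n)"
  proof (rule zsum_cong)
    fix n
    show "cc n * gam M N n * Pq q (2* n) = q powi (n* n) * Pq q (2* L) * rq q (L-n) * gam M N n"
    proof (cases "0 \<le> n")
      case True
      have "cc n * gam M N n * Pq q (2* n) = (q powi (n* n) * Pq q (2* L) * rq q (L-n) * gam M N n) * (rq q (2* n) * Pq q (2* n))"
        unfolding cc_def using True by (simp add: algebra_simps)
      thus ?thesis using rq_Pq[of "2* n"] True by simp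
    next
      case False
      hence "gam M N n = 0" using gam_nz by force
      thus ?thesis by simp
    qed
  qed
  finally show ?thesis .
qed

lemma final_sum_le:
  assumes L: "0 \<le> L" and M: "0 \<le> M" and MN: "M \<le> N"
  shows "zsum (\<lambda>n. q powi (n* n) * Pq q (2* L) * rq q (L-n) * gam M N n) = q powi ((N-M)^2) * Pq q (L+M+N) * qbinom q (2* L) (L+N-M)"
proof -
  define d where "d = N - M"
  have d0: "0 \<le> d" using MN d_def by simp
  have "zsum (\<lambda>n. q powi (n* n) * Pq q (2* L) * rq q (L-n) * gam M N n)
      = zsum (\<lambda>t. q powi ((t+d)*(t+d)) * Pq q (2* L) * rq q (L-(t+d)) * gam M N (t+d))"
    by (rule zsum_shift[symmetric])
  also have "\<dots> = zsum (\<lambda>t. (q powi (d* d) * Pq q (2* L) * Pq q (2* M) * Pq q (2* N)) *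
        (q powi (t* t + (2* d)* t) * rq q t * rq q ((L-d) - t) * rq q (2* M - t) * rq q (2* d + t)))"
  proof (rule zsum_cong)
    fix t
    have "q powi ((t+d)*(t+d)) = q powi (d* d) * q powi (t* t + (2* d)* t)"
      by (rule powi_comb[symmetric]) (simp add: algebra_simps)
    moreover have "L-(t+d) = (L-d) - t" "M+N-(t+d) = 2* M - t" "M-N+(t+d) = t" "N-M+(t+d) = 2* d+t"
      unfolding d_def by simp_all
    ultimately show "q powi ((t+d)*(t+d)) * Pq q (2* L) * rq q (L-(t+d)) * gam M N (t+d) =
        (q powi (d* d) * Pq q (2* L) * Pq q (2* M) * Pq q (2* N)) *
        (q powi (t* t + (2* d)* t) * rq q t * rq q ((L-d) - t) * rq q (2* M - t) * rq q (2* d + t))"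
      unfolding gam_def by (simp add: algebra_simps)
  qed
  also have "\<dots> = q powi ((N-M)^2) * Pq q (L+M+N) * qbinom q (2* L) (L+N-M)"
  proof (cases "0 \<le> L - d")
    case True
    have "zsum (\<lambda>t. q powi (t* t + (2* d)* t) * rq q t * rq q ((L-d) - t) * rq q (2* M - t) * rq q (2* d + t))
        = S7 (2* M) (nat (L-d)) (2* d)"
      unfolding S7_def using True by simp
    also have "\<dots> = rq q (L-d) * rq q (2* M) * Pq q (L+M+N) * rq q (L+N-M) * rq q (2* N)"
    proof -
      have c0: "0 \<le> 2* d" using d0 by simp
      have K0: "0 \<le> 2* M" using M by simp
      have nn: "int (nat (L-d)) = L - d" using True by simp
      have ar: "2* d + (L-d) = L+N-M" "L+N-M + 2* M = L+M+N" "2* d+2* M = 2* N" unfolding d_def by simp_all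
      show ?thesis using S7_eq[OF c0 K0, of "nat (L-d)", unfolded nn ar] .
    qed
    finally have z: "zsum (\<lambda>t. q powi (t* t + (2* d)* t) * rq q t * rq q ((L-d) - t) * rq q (2* M - t) * rq q (2* d + t))
        = rq q (L-d) * rq q (2* M) * Pq q (L+M+N) * rq q (L+N-M) * rq q (2* N)" .
    have qb: "qbinom q (2* L) (L+N-M) = Pq q (2* L) * rq q (L+N-M) * rq q (L-d)"
      using qbinom_rq[of "2* L" "L+N-M"] L unfolding d_def by (simp add: algebra_simps)
    have sq: "(N-M)^2 = d* d" unfolding d_def by (simp add: power2_eq_square)
    have "(q powi (d* d) * Pq q (2* L) * Pq q (2* M) * Pq q (2* N)) * (rq q (L-d) * rq q (2* M) * Pq q (L+M+N) * rq q (L+N-M) * rq q (2* N))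
       = q powi (d* d) * Pq q (L+M+N) * (Pq q (2* L) * rq q (L+N-M) * rq q (L-d)) * (Pq q (2* M) * rq q (2* M)) * (Pq q (2* N) * rq q (2* N))"
      by (simp add: algebra_simps)
    also have "\<dots> = q powi ((N-M)^2) * Pq q (L+M+N) * qbinom q (2* L) (L+N-M)"
      unfolding qb sq using Pq_rq[of "2* M"] Pq_rq[of "2* N"] M MN by simp
    finally show ?thesis unfolding zsum_cmult z .
  next
    case False
    have "zsum (\<lambda>t. q powi (t* t + (2* d)* t) * rq q t * rq q ((L-d) - t) * rq q (2* M - t) * rq q (2* d + t)) = 0"
      using False by (intro zsum_zero) (simp add: rq_def)
    moreover have "qbinom q (2* L) (L+N-M) = 0" using False unfolding d_def by (simp add: qbinom_def)
    ultimately show ?thesis unfolding zsum_cmult by simp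
  qed
  finally show ?thesis .
qed

lemma final_sum:
  assumes L: "0 \<le> L" and M: "0 \<le> M" and N: "0 \<le> N"
  shows "zsum (\<lambda>n. q powi (n* n) * Pq q (2* L) * rq q (L-n) * gam M N n) = q powi ((N-M)^2) * Pq q (L+M+N) * qbinom q (2* L) (L+N-M)"
proof (cases "M \<le> N")
  case True thus ?thesis by (rule final_sum_le[OF L M])
next
  case False
  have g: "gam M N n = gam N M n" for n unfolding gam_def by (simp add: algebra_simps)
  have "zsum (\<lambda>n. q powi (n* n) * Pq q (2* L) * rq q (L-n) * gam N M n) = q powi ((M-N)^2) * Pq q (L+N+M) * qbinom q (2* L) (L+M-N)"
    by (rule final_sum_le[OF L N]) (use False in simp)
  moreover have "(M-N)^2 = (N-M)^2" by (simp add: power2_eq_square algebra_simps)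
  moreover have "qbinom q (2* L) (L+M-N) = qbinom q (2* L) (L+N-M)"
    using qbinom_rq[of "2* L" "L+M-N"] qbinom_rq[of "2* L" "L+N-M"] L by (simp add: algebra_simps)
  moreover have "L+N+M = L+M+N" by simp
  ultimately show ?thesis unfolding g by simp
qed

lemma main_q:
  assumes L: "0 \<le> L" and M: "0 \<le> M" and N: "0 \<le> N"
  shows "zsum (\<lambda>i. zsum (\<lambda>j. zsum (\<lambda>k. q powi (i* i) * Aq q L i * Aq q M j * Aq q N k * wt q (i+j+k))))
       = q powi ((N-M)^2) * qpoch q (nat (L+M+N)) * qbinom q (2* L) (L+N-M)"
proof -
  have "zsum (\<lambda>i. zsum (\<lambda>j. zsum (\<lambda>k. q powi (i* i) * Aq q L i * Aq q M j * Aq q N k * wt q (i+j+k))))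
       = zsum (\<lambda>n. q powi (n* n) * Pq q (2* L) * rq q (L-n) * gam M N n)" by (rule T_eq[OF L M N])
  also have "\<dots> = q powi ((N-M)^2) * Pq q (L+M+N) * qbinom q (2* L) (L+N-M)" by (rule final_sum[OF L M N])
  finally show ?thesis by (simp add: Pq_def)
qed

end

lemma qpoch_zero: "qpoch 0 n = 1" by (induction n) (simp_all add: qpoch_Suc)

lemma isCont_qpoch: "isCont (\<lambda>q. qpoch q n) a"
proof (induction n)
  case 0 show ?case by simp
next
  case (Suc n)
  have "(\<lambda>q. qpoch q (Suc n)) = (\<lambda>q. qpoch q n * (1 - q ^ Suc n))" by (simp add: qpoch_Suc)
  thus ?case by (simp only:) (intro continuous_intros Suc.IH)
qed

lemma isCont_qbinom0: "isCont (\<lambda>q. qbinom q a b) 0"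
proof (cases "0 \<le> b \<and> 0 \<le> a - b")
  case True
  hence "(\<lambda>q. qbinom q a b) = (\<lambda>q. qpoch q (nat a) / (qpoch q (nat b) * qpoch q (nat (a - b))))"
    by (simp add: qbinom_def fun_eq_iff)
  thus ?thesis by (simp only:) (intro continuous_intros isCont_qpoch, simp add: qpoch_zero)
next
  case False
  hence "(\<lambda>q. qbinom q a b) = (\<lambda>q. 0)" by (auto simp: qbinom_def fun_eq_iff)
  thus ?thesis by simp
qed

lemma isCont_powi_nonneg: "0 \<le> e \<Longrightarrow> isCont (\<lambda>q::complex. q powi e) a"
proof -
  assume "0 \<le> e"
  hence "(\<lambda>q::complex. q powi e) = (\<lambda>q. q ^ nat e)" by (simp add: power_int_nonneg_exp fun_eq_iff)
  thus ?thesis by (simp only:) (intro continuous_intros)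
qed

lemma zsum3:
  assumes A: "finite A" and B: "finite B" and C: "finite C"
    and G: "\<And>i j k. G i j k \<noteq> 0 \<Longrightarrow> i \<in> A \<and> j \<in> B \<and> k \<in> C"
  shows "zsum (\<lambda>i. zsum (\<lambda>j. zsum (\<lambda>k. G i j k))) = (\<Sum>i\<in>A. \<Sum>j\<in>B. \<Sum>k\<in>C. G i j k)"
proof -
  have 1: "zsum (\<lambda>k. G i j k) = (\<Sum>k\<in>C. G i j k)" for i j
    by (rule zsum_eq[OF C]) (use G in blast)
  have 2: "zsum (\<lambda>j. \<Sum>k\<in>C. G i j k) = (\<Sum>j\<in>B. \<Sum>k\<in>C. G i j k)" for i
    by (rule zsum_eq[OF B]) (use G in \<open>auto intro!: sum.neutral\<close>)
  have 3: "zsum (\<lambda>i. \<Sum>j\<in>B. \<Sum>k\<in>C. G i j k) = (\<Sum>i\<in>A. \<Sum>j\<in>B. \<Sum>k\<in>C. G i j k)"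
    by (rule zsum_eq[OF A]) (use G in \<open>auto intro!: sum.neutral\<close>)
  show ?thesis unfolding 1 2 3 ..
qed

theorem mainTheorem9:
  fixes q :: complex and L M N :: int
  assumes "norm q < 1" and "0 \<le> L" and "0 \<le> M" and "0 \<le> N"
  shows "((\<lambda>(i, j, k). (-1) ^ nat \<bar>i + j + k\<bar> * q powi (choose2 (i + j + k) + i ^ 2)
            * qbinom q (2 * L) (L - i) * qbinom q (2 * M) (M - j) * qbinom q (2 * N) (N - k))
          has_sum (q powi ((N - M) ^ 2) * qpoch q (nat (L + M + N)) * qbinom q (2 * L) (L + N - M)))
         (UNIV :: (int \<times> int \<times> int) set)"
proof -
  note qn = assms(1) and L = assms(2) and M = assms(3) and N = assms(4)
  define F where "F q = (\<lambda>(i, j, k). (-1) ^ nat \<bar>i + j + k\<bar> * q powi (choose2 (i + j + k) + i ^ 2)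
            * qbinom q (2 * L) (L - i) * qbinom q (2 * M) (M - j) * qbinom q (2 * N) (N - k))" for q :: complex
  define R where "R q = q powi ((N - M) ^ 2) * qpoch q (nat (L + M + N)) * qbinom q (2 * L) (L + N - M)" for q :: complex
  define Bx where "Bx = {-L..L} \<times> {-M..M} \<times> {-N..N}"
  have fin: "finite Bx" unfolding Bx_def by simp
  have van: "F q x = 0" if "x \<notin> Bx" for q x
  proof -
    obtain i j k where x: "x = (i, j, k)" by (cases x) auto
    have "qbinom q (2 * L) (L - i) * qbinom q (2 * M) (M - j) * qbinom q (2 * N) (N - k) = 0"
    proof (rule ccontr)
      assume "qbinom q (2 * L) (L - i) * qbinom q (2 * M) (M - j) * qbinom q (2 * N) (N - k) \<noteq> 0"
      hence "qbinom q (2 * L) (L - i) \<noteq> 0" "qbinom q (2 * M) (M - j) \<noteq> 0" "qbinom q (2 * N) (N - k) \<noteq> 0" by auto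
      hence "x \<in> Bx" unfolding x Bx_def by (auto dest!: qbinom_nz)
      thus False using that by simp
    qed
    have "F q x = ((-1) ^ nat \<bar>i + j + k\<bar> * q powi (choose2 (i + j + k) + i ^ 2))
       * (qbinom q (2 * L) (L - i) * qbinom q (2 * M) (M - j) * qbinom q (2 * N) (N - k))"
      unfolding F_def x by (simp only: case_prod_conv mult.assoc)
    also have "\<dots> = 0" unfolding \<open>qbinom q (2 * L) (L - i) * qbinom q (2 * M) (M - j) * qbinom q (2 * N) (N - k) = 0\<close> by simp
    finally show ?thesis .
  qed
  have hs: "(F q has_sum sum (F q) Bx) UNIV" for q
  proof -
    have "(F q has_sum sum (F q) Bx) Bx" by (rule has_sum_finiteI[OF fin refl])
    moreover have "(F q has_sum sum (F q) Bx) Bx \<longleftrightarrow> (F q has_sum sum (F q) Bx) UNIV"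
      by (rule has_sum_cong_neutral) (auto intro: van)
    ultimately show ?thesis by simp
  qed
  have sumBx: "sum (F q) Bx = (\<Sum>i\<in>{-L..L}. \<Sum>j\<in>{-M..M}. \<Sum>k\<in>{-N..N}. F q (i, j, k))" for q
    unfolding Bx_def by (simp add: sum.cartesian_product)
  have V: "sum (F q) Bx = R q" if q0: "q \<noteq> 0" and q1: "norm q < 1" for q
  proof -
    interpret qc q using q0 q1 by unfold_locales
    have Fe: "F q (i, j, k) = q powi (i*i) * Aq q L i * Aq q M j * Aq q N k * wt q (i+j+k)" for i j k
    proof -
      have "q powi (choose2 (i + j + k) + i ^ 2) = q powi (choose2 (i+j+k)) * q powi (i*i)"
        by (simp add: powi_add power2_eq_square)
      thus ?thesis unfolding F_def Aq_def wt_def by (simp add: algebra_simps)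
    qed
    have "sum (F q) Bx = (\<Sum>i\<in>{-L..L}. \<Sum>j\<in>{-M..M}. \<Sum>k\<in>{-N..N}. q powi (i*i) * Aq q L i * Aq q M j * Aq q N k * wt q (i+j+k))"
      unfolding sumBx Fe ..
    also have "\<dots> = zsum (\<lambda>i. zsum (\<lambda>j. zsum (\<lambda>k. q powi (i*i) * Aq q L i * Aq q M j * Aq q N k * wt q (i+j+k))))"
      by (rule zsum3[symmetric]) (auto dest!: Aq_nz)
    also have "\<dots> = R q" unfolding main_q[OF L M N] R_def ..
    finally show ?thesis .
  qed
  have V0: "sum (F 0) Bx = R 0"
  proof -
    have cF: "isCont (\<lambda>q. sum (F q) Bx) 0"
    proof (rule isCont_sum, rule ballI)
      fix x assume "x \<in> Bx"
      obtain i j k where x: "x = (i, j, k)" by (cases x) auto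
      have e: "0 \<le> choose2 (i + j + k) + i ^ 2" using c2_nonneg[of "i+j+k"] by simp
      show "isCont (\<lambda>q. F q x) 0" unfolding F_def x
        by (simp only: case_prod_conv) (intro continuous_intros isCont_qbinom0 isCont_powi_nonneg e)
    qed
    have cR: "isCont R 0" unfolding R_def
      by (intro continuous_intros isCont_qbinom0 isCont_powi_nonneg isCont_qpoch) simp
    have ev: "eventually (\<lambda>q. sum (F q) Bx = R q) (at 0)"
      unfolding eventually_at
      by (rule exI[of _ 1]) (auto intro!: V)
    have "((\<lambda>q. sum (F q) Bx) \<longlongrightarrow> sum (F 0) Bx) (at 0)" using cF by (simp add: isCont_def)
    moreover have "((\<lambda>q. sum (F q) Bx) \<longlongrightarrow> R 0) (at 0)"
      using cR unfolding isCont_def by (rule tendsto_cong[OF ev, THEN iffD2])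
    ultimately show ?thesis by (rule LIM_unique)
  qed
  have "sum (F q) Bx = R q"
    using V V0 qn by (cases "q = 0") auto
  hence "(F q has_sum R q) UNIV" using hs[of q] by simp
  thus ?thesis by (simp only: F_def R_def)
qed

end
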